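(* Let $p$ be a prime and $m\ge 2$ an integer. Let $W=\langle a_0\rangle\times\langle a_1\rangle\times\cdots\times\langle a_{p-1}\rangle$ be abelian with $a_0$ of order $p^m$ and $a_i$ of order $p^{m-1}$ for $1\le i\le p-1$, and let $\phi:W\to W$ be the map with $\phi(a_i)=a_ia_{i+1}$ for $0\le i\le p-2$ and $\phi(a_{p-1})=a_{p-1}\prod_{j=1}^{p-1}a_j^{-\binom{p}{j}}$. Then $\phi$ is an automorphism of $W$ of order $p$; in particular the semidirect product $W\rtimes\langle b_0\rangle$, with $b_0$ of order $p^{m-1}$ acting via $b_0^{-1}wb_0=\phi(w)$, is well-defined. *)

theory Defs
  imports "HOL-Algebra.Algebra" "HOL-Computational_Algebra.Primes"
begin

text \<open>The abelian group W = <a_0> x <a_1> x ... x <a_(p-1)>, with a_0 of order p^m and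
  a_i of order p^(m-1) for 1 <= i <= p-1, realised as the direct product of the cyclic
  groups Z/p^m and (p-1) copies of Z/p^(m-1) (written additively, but with the
  HOL-Algebra multiplicative notation).\<close>

definition Wgrp :: "nat \<Rightarrow> nat \<Rightarrow> (nat \<Rightarrow> int) monoid" where
  "Wgrp p m = product_group {..<p}
      (\<lambda>i. integer_mod_group (if i = 0 then p ^ m else p ^ (m - 1)))"

definition gen :: "nat \<Rightarrow> nat \<Rightarrow> (nat \<Rightarrow> int)" where
  "gen p i = (\<lambda>j\<in>{..<p}. if j = i then 1 else 0)"

end

theory Submission
  imports Defs "HOL-Computational_Algebra.Polynomial"
begin


definition Lv :: "nat \<Rightarrow> (nat \<Rightarrow> int) \<Rightarrow> (nat \<Rightarrow> int)" where
  "Lv p x = (\<lambda>j. if j = 0 then x 0 else x j + x (j - 1) - int (p choose j) * x (p - 1))"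
definition PP :: "nat \<Rightarrow> (nat \<Rightarrow> int) \<Rightarrow> int poly" where
  "PP p x = (\<Sum>i<p. monom (x i) i)"
definition fp :: "nat \<Rightarrow> int poly" where
  "fp p = (\<Sum>k\<in>{1..p}. monom (int (p choose k)) k)"

lemma coeff_PP: "coeff (PP p x) j = (if j < p then x j else 0)"
  by (simp add: PP_def coeff_sum coeff_monom)

lemma coeff_fp: "coeff (fp p) j = (if 1 \<le> j \<and> j \<le> p then int (p choose j) else 0)"
  by (simp add: fp_def coeff_sum coeff_monom)

lemma fp_eq: "fp p = [:1,1:]^p - 1"
proof -
  have "[:1,1:] = (monom 1 1 + 1 :: int poly)"
    by (simp add: monom_Suc one_pCons)
  then have "[:1,1:]^p = (\<Sum>k\<le>p. of_nat (p choose k) * monom (1::int) 1 ^ k * 1 ^ (p - k))"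
    by (simp add: binomial_ring)
  also have "\<dots> = (\<Sum>k\<le>p. monom (int (p choose k)) k)"
    by (simp add: monom_power of_nat_poly monom_0 mult_monom flip: monom_0)
  also have "\<dots> = monom (int (p choose 0)) 0 + fp p"
  proof -
    have "{..p} = insert 0 {1..p}" by auto
    then show ?thesis unfolding fp_def by simp
  qed
  finally show ?thesis by simp
qed

lemma PP_Lv:
  assumes "p > 0"
  shows "PP p (Lv p x) = [:1,1:] * PP p x - smult (x (p - 1)) (fp p)"
proof (rule poly_eqI)
  fix j
  show "coeff (PP p (Lv p x)) j = coeff ([:1,1:] * PP p x - smult (x (p - 1)) (fp p)) j"
  proof (cases j)
    case 0
    then show ?thesis using assms by (simp add: coeff_PP coeff_fp Lv_def)
  next
    case (Suc k)
    consider "Suc k < p" | "Suc k = p" | "Suc k > p" by linarith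
    then show ?thesis
      using assms Suc by cases (auto simp add: coeff_PP coeff_fp Lv_def coeff_pCons)
  qed
qed

lemma Lv_iter:
  assumes "p > 0"
  shows "\<exists>g. PP p ((Lv p ^^ k) x) = [:1,1:]^k * PP p x + g * fp p"
proof (induction k)
  case 0
  show ?case by (rule exI[of _ 0]) simp
next
  case (Suc k)
  then obtain g where g: "PP p ((Lv p ^^ k) x) = [:1,1:]^k * PP p x + g * fp p" by blast
  let ?y = "(Lv p ^^ k) x"
  have "PP p ((Lv p ^^ Suc k) x) = [:1,1:] * PP p ?y - smult (?y (p - 1)) (fp p)"
    using PP_Lv[OF assms] by simp
  also have "\<dots> = [:1,1:]^Suc k * PP p x + ([:1,1:] * g - [:?y (p - 1):]) * fp p"
    unfolding g by (simp add: algebra_simps)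
  finally show ?case by blast
qed

lemma degree_PP: "p > 0 \<Longrightarrow> degree (PP p x) < p"
proof -
  assume "p > 0"
  have "degree (PP p x) \<le> p - 1"
    by (rule degree_le) (auto simp: coeff_PP)
  then show ?thesis using \<open>p > 0\<close> by linarith
qed

lemma degree_fp: "degree (fp p) = p"
proof (rule antisym)
  show "degree (fp p) \<le> p" by (rule degree_le) (auto simp: coeff_fp)
  show "p \<le> degree (fp p)"
  proof (cases "p = 0")
    case False
    then show ?thesis by (intro le_degree) (simp add: coeff_fp)
  qed simp
qed

lemma Lv_pow_p:
  assumes "p > 0" "j < p"
  shows "(Lv p ^^ p) x j = x j"
proof -
  obtain g where g: "PP p ((Lv p ^^ p) x) = [:1,1:]^p * PP p x + g * fp p"
    using Lv_iter[OF assms(1)] by blast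
  have eq: "PP p ((Lv p ^^ p) x) - PP p x = (PP p x + g) * fp p"
    unfolding g by (simp add: fp_eq algebra_simps)
  moreover have "PP p x + g = 0"
  proof (rule ccontr)
    assume ne: "PP p x + g \<noteq> 0"
    have "fp p \<noteq> 0" using degree_fp assms(1) by (metis degree_0 less_irrefl)
    then have d1: "degree ((PP p x + g) * fp p) \<ge> p"
      using ne by (simp add: degree_mult_eq degree_fp)
    have d2: "degree (PP p ((Lv p ^^ p) x) - PP p x) < p"
    proof -
      have "degree (PP p y) \<le> p - 1" for y using degree_PP[OF assms(1), of y] by linarith
      then have "degree (PP p ((Lv p ^^ p) x) - PP p x) \<le> p - 1" by (intro degree_diff_le)
      then show ?thesis using assms(1) by linarith
    qed
    show False using d1 d2 eq by simp
  qed
  ultimately have "PP p ((Lv p ^^ p) x) = PP p x" by simp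
  then have "coeff (PP p ((Lv p ^^ p) x)) j = coeff (PP p x) j" by simp
  then show ?thesis using assms by (simp add: coeff_PP)
qed


definition nn :: "nat \<Rightarrow> nat \<Rightarrow> nat \<Rightarrow> nat" where
  "nn p m i = (if i = 0 then p ^ m else p ^ (m - 1))"
definition red :: "nat \<Rightarrow> nat \<Rightarrow> (nat \<Rightarrow> int) \<Rightarrow> (nat \<Rightarrow> int)" where
  "red p m y = (\<lambda>j\<in>{..<p}. y j mod int (nn p m j))"
definition phi0 :: "nat \<Rightarrow> nat \<Rightarrow> (nat \<Rightarrow> int) \<Rightarrow> (nat \<Rightarrow> int)" where
  "phi0 p m x = red p m (Lv p x)"

locale Wctx =
  fixes p m :: nat
  assumes pr: "Factorial_Ring.prime p" and m2: "m \<ge> 2"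
begin

abbreviation "W \<equiv> Wgrp p m"
abbreviation "n \<equiv> nn p m"

lemma p2: "p \<ge> 2" using pr by (simp add: prime_ge_2_nat)

lemma W_eq: "W = product_group {..<p} (\<lambda>i. integer_mod_group (n i))"
  by (simp add: Wgrp_def nn_def)

lemma nn_gt1: "n i > 1"
proof -
  have "p ^ (m - 1) > 1" using p2 m2 by (intro one_less_power) auto
  moreover have "p ^ m > 1" using p2 m2 by (intro one_less_power) auto
  ultimately show ?thesis by (simp add: nn_def)
qed

lemma carrier_W: "carrier W = (\<Pi>\<^sub>E i\<in>{..<p}. {0..<int (n i)})"
proof -
  have nz: "n i \<noteq> 0" for i using nn_gt1[of i] by linarith
  show ?thesis by (simp add: W_eq carrier_integer_mod_group nz)
qed

lemma nn_pos: "0 < int (n i)" using nn_gt1[of i] by linarith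

lemma mult_W: "x \<otimes>\<^bsub>W\<^esub> y = (\<lambda>i\<in>{..<p}. (x i + y i) mod int (n i))"
  by (simp add: W_eq)

lemma one_W: "\<one>\<^bsub>W\<^esub> = (\<lambda>i\<in>{..<p}. 0)"
  by (simp add: W_eq)

lemma group_W: "group W"
  unfolding W_eq by (rule product_group) simp

lemma comm_group_W: "comm_group W"
proof -
  interpret group W by (rule group_W)
  show ?thesis
  proof (rule group_comm_groupI)
    fix x y assume "x \<in> carrier W" "y \<in> carrier W"
    show "x \<otimes>\<^bsub>W\<^esub> y = y \<otimes>\<^bsub>W\<^esub> x" by (simp add: mult_W add.commute)
  qed
qed

lemma red_carrier: "red p m y \<in> carrier W"
  using nn_pos by (auto simp: carrier_W red_def)

lemma red_id: "x \<in> carrier W \<Longrightarrow> red p m x = x"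
  by (auto simp: carrier_W red_def PiE_def Pi_def extensional_def fun_eq_iff)

lemma Lv_cong:
  assumes "j < p" "\<And>i. i < p \<Longrightarrow> x i mod int (n i) = y i mod int (n i)"
  shows "Lv p x j mod int (n j) = Lv p y j mod int (n j)"
proof (cases "j = 0")
  case True
  then show ?thesis using assms p2 by (simp add: Lv_def)
next
  case False
  let ?q = "int (p ^ (m - 1))"
  have dv: "?q dvd int (n i)" for i
    by (auto simp: nn_def intro!: le_imp_power_dvd)
  have c: "x i mod ?q = y i mod ?q" if "i < p" for i
    by (metis assms(2)[OF that] dv mod_mod_cancel)
  have "Lv p x j mod ?q = (x j + x (j - 1) - int (p choose j) * x (p - 1)) mod ?q"
    using False by (simp add: Lv_def)
  also have "\<dots> = (y j + y (j - 1) - int (p choose j) * y (p - 1)) mod ?q"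
    using c assms(1) p2
    by (intro mod_diff_cong mod_add_cong mod_mult_cong) auto
  also have "\<dots> = Lv p y j mod ?q" using False by (simp add: Lv_def)
  finally show ?thesis using False by (simp add: nn_def)
qed

lemma phi0_red: "phi0 p m (red p m y) = phi0 p m y"
proof -
  have "Lv p (red p m y) j mod int (n j) = Lv p y j mod int (n j)" if "j < p" for j
    by (rule Lv_cong[OF that]) (simp add: red_def)
  then show ?thesis by (auto simp: phi0_def red_def)
qed

lemma phi0_carrier: "phi0 p m x \<in> carrier W"
  by (simp add: phi0_def red_carrier)

lemma phi0_mult:
  assumes "x \<in> carrier W" "y \<in> carrier W"
  shows "phi0 p m (x \<otimes>\<^bsub>W\<^esub> y) = phi0 p m x \<otimes>\<^bsub>W\<^esub> phi0 p m y"
proof -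
  have "x \<otimes>\<^bsub>W\<^esub> y = red p m (\<lambda>i. x i + y i)" by (simp add: mult_W red_def)
  then have "phi0 p m (x \<otimes>\<^bsub>W\<^esub> y) = phi0 p m (\<lambda>i. x i + y i)" by (simp add: phi0_red)
  also have "\<dots> = phi0 p m x \<otimes>\<^bsub>W\<^esub> phi0 p m y"
    by (auto simp: phi0_def red_def mult_W Lv_def fun_eq_iff mod_add_eq algebra_simps)
  finally show ?thesis .
qed

lemma phi0_hom: "phi0 p m \<in> hom W W"
  by (auto simp: hom_def phi0_carrier phi0_mult)

lemma phi0_iter: "(phi0 p m ^^ k) (red p m y) = red p m ((Lv p ^^ k) y)"
proof (induction k)
  case 0 show ?case by simp
next
  case (Suc k)
  then show ?case by (simp add: phi0_red) (simp add: phi0_def)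
qed

lemma phi0_pow_p: "x \<in> carrier W \<Longrightarrow> (phi0 p m ^^ p) x = x"
proof -
  assume x: "x \<in> carrier W"
  have "(phi0 p m ^^ p) x = red p m ((Lv p ^^ p) x)"
    using phi0_iter[of p x] red_id[OF x] by simp
  also have "\<dots> = red p m x"
    using p2 by (auto simp: red_def Lv_pow_p)
  finally show ?thesis using red_id[OF x] by simp
qed

end


context Wctx begin

lemma nn_pos': "0 < n i" using nn_gt1[of i] by linarith

lemma gen_carrier: "i < p \<Longrightarrow> gen p i \<in> carrier W"
  using nn_gt1 nn_pos' by (auto simp: carrier_W gen_def)

lemma gen_apply: "k < p \<Longrightarrow> gen p i k = (if k = i then 1 else 0)"
  by (simp add: gen_def)

lemma proj_hom: "k < p \<Longrightarrow> (\<lambda>x. x k) \<in> hom W (integer_mod_group (n k))"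
  unfolding W_eq by (auto simp: hom_def PiE_def Pi_def)

lemma pow_coord:
  assumes "x \<in> carrier W" "k < p"
  shows "(x [^]\<^bsub>W\<^esub> (z::int)) k = (z * x k) mod int (n k)"
  using hom_int_pow[OF proj_hom[OF assms(2)] assms(1) group_W group_integer_mod_group, of z]
  by (simp add: int_pow_integer_mod_group)

lemma finprod_coord:
  assumes "finite A" "F \<in> A \<rightarrow> carrier W" "k < p"
  shows "(finprod W F A) k = (\<Sum>i\<in>A. F i k) mod int (n k)"
  using assms(1,2)
proof (induction A rule: finite_induct)
  case empty
  interpret comm_group W by (rule comm_group_W)
  show ?case using assms(3) by (simp add: one_W)
next
  case (insert a A)
  interpret comm_group W by (rule comm_group_W)
  have "finprod W F (insert a A) = F a \<otimes>\<^bsub>W\<^esub> finprod W F A"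
    using insert by (intro finprod_insert) auto
  then show ?case using insert assms(3) by (simp add: mult_W mod_add_right_eq)
qed

lemma decomp:
  assumes x: "x \<in> carrier W"
  shows "finprod W (\<lambda>i. gen p i [^]\<^bsub>W\<^esub> (x i)) {..<p} = x"
proof -
  interpret comm_group W by (rule comm_group_W)
  have F: "(\<lambda>i. gen p i [^]\<^bsub>W\<^esub> (x i)) \<in> {..<p} \<rightarrow> carrier W"
    using gen_carrier by auto
  have xk: "x k mod int (n k) = x k" if "k < p" for k
    using x that by (auto simp: carrier_W PiE_def Pi_def)
  show ?thesis
  proof (rule extensionalityI[of _ "{..<p}"])
    show "finprod W (\<lambda>i. gen p i [^]\<^bsub>W\<^esub> (x i)) {..<p} \<in> extensional {..<p}"
      using finprod_closed[OF F] by (simp add: carrier_W PiE_def)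
    show "x \<in> extensional {..<p}" using x by (simp add: carrier_W PiE_def)
    fix k assume k: "k \<in> {..<p}"
    have "finprod W (\<lambda>i. gen p i [^]\<^bsub>W\<^esub> (x i)) {..<p} k
        = (\<Sum>i<p. (x i * gen p i k) mod int (n k)) mod int (n k)"
      using k F by (simp add: finprod_coord pow_coord gen_carrier)
    also have "\<dots> = (\<Sum>i<p. x i * gen p i k) mod int (n k)"
      by (simp add: mod_sum_eq)
    also have "\<dots> = x k"
      using k by (simp add: gen_apply xk if_distrib cong: if_cong)
    finally show "finprod W (\<lambda>i. gen p i [^]\<^bsub>W\<^esub> (x i)) {..<p} k = x k" .
  qed
qed

lemma hom_finprod_W:
  assumes h: "h \<in> hom W W" and "finite A" "F \<in> A \<rightarrow> carrier W"
  shows "h (finprod W F A) = finprod W (\<lambda>i. h (F i)) A"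
  using assms(2,3)
proof (induction A rule: finite_induct)
  case empty
  interpret comm_group W by (rule comm_group_W)
  interpret group_hom W W h using h group_W by (simp add: group_hom_def group_hom_axioms_def)
  show ?case by simp
next
  case (insert a A)
  interpret comm_group W by (rule comm_group_W)
  interpret group_hom W W h using h group_W by (simp add: group_hom_def group_hom_axioms_def)
  have hF: "(\<lambda>i. h (F i)) \<in> insert a A \<rightarrow> carrier W" using insert by (auto intro: hom_closed)
  have "finprod W F (insert a A) = F a \<otimes>\<^bsub>W\<^esub> finprod W F A"
    using insert by (intro finprod_insert) auto
  moreover have "finprod W (\<lambda>i. h (F i)) (insert a A) = h (F a) \<otimes>\<^bsub>W\<^esub> finprod W (\<lambda>i. h (F i)) A"
    using insert hF by (intro finprod_insert) auto
  ultimately show ?case using insert hF by (simp add: finprod_closed)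
qed

lemma phi0_gen:
  assumes "i + 2 \<le> p"
  shows "phi0 p m (gen p i) = gen p i \<otimes>\<^bsub>W\<^esub> gen p (Suc i)"
  using assms nn_gt1 by (auto simp: phi0_def red_def mult_W Lv_def gen_def fun_eq_iff)

lemma phi0_gen_last:
  "phi0 p m (gen p (p - 1)) = gen p (p - 1) \<otimes>\<^bsub>W\<^esub>
     finprod W (\<lambda>j. gen p j [^]\<^bsub>W\<^esub> (- int (p choose j))) {1..p - 1}"
proof -
  have F: "(\<lambda>j. gen p j [^]\<^bsub>W\<^esub> (- int (p choose j))) \<in> {1..p - 1} \<rightarrow> carrier W"
    using gen_carrier group.int_pow_closed[OF group_W] by auto
  show ?thesis
  proof (rule ext)
    fix k
    show "phi0 p m (gen p (p - 1)) k = (gen p (p - 1) \<otimes>\<^bsub>W\<^esub>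
     finprod W (\<lambda>j. gen p j [^]\<^bsub>W\<^esub> (- int (p choose j))) {1..p - 1}) k"
    proof (cases "k < p")
      case False then show ?thesis by (simp add: phi0_def red_def mult_W)
    next
      case k: True
      have s: "(\<Sum>j\<in>{1..p - 1}. (- int (p choose j) * gen p j k) mod int (n k)) mod int (n k)
           = (\<Sum>j\<in>{1..p - 1}. - int (p choose j) * gen p j k) mod int (n k)"
        by (simp add: mod_sum_eq)
      have s2: "(\<Sum>j\<in>{1..p - 1}. - int (p choose j) * gen p j k)
          = (if 1 \<le> k then - int (p choose k) else 0)"
        using k by (simp add: gen_apply if_distrib cong: if_cong)
      have s0: "(\<Sum>i\<in>{1..p - 1}. (gen p i [^]\<^bsub>W\<^esub> (- int (p choose i))) k)
          = (\<Sum>j\<in>{1..p - 1}. (- int (p choose j) * gen p j k) mod int (n k))"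
        using k p2 by (intro sum.cong) (auto simp: pow_coord gen_carrier)
      let ?fin = "finprod W (\<lambda>j. gen p j [^]\<^bsub>W\<^esub> (- int (p choose j))) {1..p - 1}"
      have f1: "?fin k = (\<Sum>i\<in>{1..p - 1}. (gen p i [^]\<^bsub>W\<^esub> (- int (p choose i))) k) mod int (n k)"
        by (rule finprod_coord[OF _ F k]) simp
      have rhs: "(gen p (p - 1) \<otimes>\<^bsub>W\<^esub> ?fin) k
         = (gen p (p - 1) k + (if 1 \<le> k then - int (p choose k) else 0)) mod int (n k)"
      proof -
        have "(gen p (p - 1) \<otimes>\<^bsub>W\<^esub> ?fin) k = (gen p (p - 1) k + ?fin k) mod int (n k)"
          using k by (simp add: mult_W)
        also have "\<dots> = (gen p (p - 1) k + (if 1 \<le> k then - int (p choose k) else 0) mod int (n k)) mod int (n k)"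
          unfolding f1 s0 s s2 ..
        finally show ?thesis by (simp add: mod_add_right_eq)
      qed
      show ?thesis
        unfolding rhs using k p2 by (auto simp: phi0_def red_def Lv_def gen_apply)
    qed
  qed
qed

end


context Wctx begin

abbreviation "h \<equiv> restrict (phi0 p m) (carrier W)"
abbreviation "AG \<equiv> AutoGroup W"

lemma phi0_funpow_carrier: "x \<in> carrier W \<Longrightarrow> (phi0 p m ^^ k) x \<in> carrier W"
  by (induction k) (auto simp: phi0_carrier)

lemma h_auto: "h \<in> auto W"
proof -
  interpret group W by (rule group_W)
  have hh: "h \<in> hom W W"
    using phi0_hom by (auto simp: hom_def)
  have p1: "p = Suc (p - 1)" using p2 by simp
  have fs: "(phi0 p m ^^ Suc (p - 1)) x = (phi0 p m ^^ (p - 1)) (phi0 p m x)" for x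
    by (simp only: funpow_Suc_right o_apply)
  have fs2: "(phi0 p m ^^ Suc (p - 1)) x = phi0 p m ((phi0 p m ^^ (p - 1)) x)" for x
    by (simp only: funpow.simps o_apply)
  have bk: "(phi0 p m ^^ (p - 1)) (phi0 p m x) = x" if "x \<in> carrier W" for x
    using phi0_pow_p[OF that] fs[of x] p1 by simp
  have "inj_on h (carrier W)"
  proof (rule inj_onI)
    fix x y assume xy: "x \<in> carrier W" "y \<in> carrier W" "h x = h y"
    then have "phi0 p m x = phi0 p m y" by simp
    then show "x = y" using bk[OF xy(1)] bk[OF xy(2)] by simp
  qed
  moreover have "h ` carrier W = carrier W"
  proof
    show "h ` carrier W \<subseteq> carrier W" using phi0_carrier by auto
    show "carrier W \<subseteq> h ` carrier W"
    proof
      fix x assume x: "x \<in> carrier W"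
      have e: "x = phi0 p m ((phi0 p m ^^ (p - 1)) x)"
        using phi0_pow_p[OF x] fs2[of x] p1 by simp
      have c: "(phi0 p m ^^ (p - 1)) x \<in> carrier W" by (rule phi0_funpow_carrier[OF x])
      then have "h ((phi0 p m ^^ (p - 1)) x) = x" using e by simp
      then show "x \<in> h ` carrier W" using c by (metis image_eqI)
    qed
  qed
  ultimately have "h \<in> Bij (carrier W)"
    by (simp add: Bij_def bij_betw_def)
  with hh show ?thesis by (simp add: auto_def)
qed

lemma group_AG: "group AG"
  by (rule group.AutoGroup[OF group_W])

lemma h_pow: "h [^]\<^bsub>AG\<^esub> k = restrict (phi0 p m ^^ k) (carrier W)"
proof (induction k)
  case 0
  show ?case by (simp add: AutoGroup_def BijGroup_def)
next
  case (Suc k)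
  interpret AGg: group AG by (rule group_AG)
  have hA: "h \<in> carrier AG" using h_auto by (simp add: AutoGroup_def)
  have c1: "h [^]\<^bsub>AG\<^esub> k \<in> Bij (carrier W)"
    using AGg.nat_pow_closed[OF hA, of k] by (simp add: AutoGroup_def auto_def)
  have c2: "h \<in> Bij (carrier W)" using h_auto by (simp add: auto_def)
  have mAG: "x \<otimes>\<^bsub>AG\<^esub> y = compose (carrier W) x y"
    if "x \<in> Bij (carrier W)" "y \<in> Bij (carrier W)" for x y
    using that by (simp add: AutoGroup_def BijGroup_def)
  have "h [^]\<^bsub>AG\<^esub> Suc k = h [^]\<^bsub>AG\<^esub> k \<otimes>\<^bsub>AG\<^esub> h" by (rule AGg.nat_pow_Suc)
  also have "\<dots> = compose (carrier W) (h [^]\<^bsub>AG\<^esub> k) h" by (rule mAG[OF c1 c2])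
  also have "\<dots> = compose (carrier W) (restrict (phi0 p m ^^ k) (carrier W)) h" by (simp only: Suc.IH)
  also have "\<dots> = restrict (phi0 p m ^^ Suc k) (carrier W)"
    unfolding compose_def
  proof (rule restrict_ext)
    fix x assume x: "x \<in> carrier W"
    have "phi0 p m x \<in> carrier W" by (rule phi0_carrier)
    then show "restrict (phi0 p m ^^ k) (carrier W) (h x) = (phi0 p m ^^ Suc k) x"
      using x by (simp only: restrict_apply' funpow_Suc_right o_apply)
  qed
  finally show ?case .
qed

lemma h_pow_p: "h [^]\<^bsub>AG\<^esub> p = \<one>\<^bsub>AG\<^esub>"
  unfolding h_pow using phi0_pow_p
  by (auto simp: AutoGroup_def BijGroup_def fun_eq_iff)

lemma h_ne_one: "h \<noteq> \<one>\<^bsub>AG\<^esub>"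
proof
  assume a: "h = \<one>\<^bsub>AG\<^esub>"
  have g0: "gen p 0 \<in> carrier W" using gen_carrier p2 by simp
  have one: "\<one>\<^bsub>AG\<^esub> = (\<lambda>x\<in>carrier W. x)" by (simp add: AutoGroup_def BijGroup_def)
  have "h (gen p 0) = \<one>\<^bsub>AG\<^esub> (gen p 0)" by (rule fun_cong[OF a])
  then have "phi0 p m (gen p 0) = gen p 0" using g0 unfolding one by simp
  then have e: "phi0 p m (gen p 0) 1 = gen p 0 1" by simp
  have p1: "1 < p" using p2 by simp
  have z: "gen p 0 1 = 0" using p1 by (simp add: gen_def)
  have o: "gen p 0 0 = 1" using p1 by (simp add: gen_def)
  have z2: "gen p 0 (p - 1) = 0" using p1 by (simp add: gen_def)
  have "Lv p (gen p 0) 1 = 1" unfolding Lv_def using z o z2 by simp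
  moreover have "(1::int) mod int (n 1) = 1" using nn_gt1[of 1] by simp
  ultimately have "phi0 p m (gen p 0) 1 = 1" using p1 by (simp add: phi0_def red_def)
  then show False using e z by simp
qed

lemma h_ord: "group.ord AG h = p"
proof -
  interpret AGg: group AG by (rule group_AG)
  have hc: "h \<in> carrier AG" using h_auto by (simp add: AutoGroup_def)
  have "AGg.ord h dvd p" using AGg.pow_eq_id[OF hc] h_pow_p by blast
  moreover have "AGg.ord h \<noteq> 1" using AGg.ord_eq_1[OF hc] h_ne_one by blast
  ultimately show ?thesis using pr by (auto simp: prime_nat_iff)
qed

lemma h_pow_big: "h [^]\<^bsub>AG\<^esub> (p ^ (m - 1)) = \<one>\<^bsub>AG\<^esub>"
proof -
  interpret AGg: group AG by (rule group_AG)
  have hc: "h \<in> carrier AG" using h_auto by (simp add: AutoGroup_def)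
  have "p dvd p ^ (m - 1)" using m2 by (simp add: dvd_power)
  then show ?thesis using AGg.pow_eq_id[OF hc] h_ord by simp
qed

lemma unique:
  assumes hom: "\<psi> \<in> hom W W"
    and g1: "\<forall>i. i + 2 \<le> p \<longrightarrow> \<psi> (gen p i) = gen p i \<otimes>\<^bsub>W\<^esub> gen p (Suc i)"
    and g2: "\<psi> (gen p (p - 1)) = gen p (p - 1) \<otimes>\<^bsub>W\<^esub>
                 finprod W (\<lambda>j. gen p j [^]\<^bsub>W\<^esub> (- int (p choose j))) {1..p - 1}"
  shows "restrict \<psi> (carrier W) = h"
proof (rule restrict_ext)
  fix x assume x: "x \<in> carrier W"
  interpret comm_group W by (rule comm_group_W)
  have eqg: "\<psi> (gen p i) = phi0 p m (gen p i)" if "i < p" for i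
  proof (cases "i + 2 \<le> p")
    case True then show ?thesis using g1 phi0_gen by simp
  next
    case False then have "i = p - 1" using that by linarith
    then show ?thesis using g2 phi0_gen_last by simp
  qed
  have F: "(\<lambda>i. gen p i [^]\<^bsub>W\<^esub> (x i)) \<in> {..<p} \<rightarrow> carrier W"
    using gen_carrier by auto
  have "\<psi> x = finprod W (\<lambda>i. \<psi> (gen p i [^]\<^bsub>W\<^esub> (x i))) {..<p}"
    using hom_finprod_W[OF hom _ F] decomp[OF x] by simp
  also have "\<dots> = finprod W (\<lambda>i. phi0 p m (gen p i [^]\<^bsub>W\<^esub> (x i))) {..<p}"
  proof (rule finprod_cong')
    show "(\<lambda>i. phi0 p m (gen p i [^]\<^bsub>W\<^esub> (x i))) \<in> {..<p} \<rightarrow> carrier W"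
      using phi0_carrier by auto
    fix i assume "i \<in> {..<p}"
    then show "\<psi> (gen p i [^]\<^bsub>W\<^esub> x i) = phi0 p m (gen p i [^]\<^bsub>W\<^esub> x i)"
      using hom_int_pow[OF hom gen_carrier group_W group_W] hom_int_pow[OF phi0_hom gen_carrier group_W group_W]
        eqg by simp
  qed simp
  also have "\<dots> = phi0 p m x"
    using hom_finprod_W[OF phi0_hom _ F] decomp[OF x] by simp
  finally show "\<psi> x = phi0 p m x" .
qed

end

theorem mainTheorem14:
  fixes p m :: nat
  assumes "Factorial_Ring.prime p" and "m \<ge> 2"
  shows "(\<exists>\<phi>. \<phi> \<in> hom (Wgrp p m) (Wgrp p m)
            \<and> (\<forall>i. i + 2 \<le> p \<longrightarrow>
                   \<phi> (gen p i) = gen p i \<otimes>\<^bsub>Wgrp p m\<^esub> gen p (Suc i))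
            \<and> \<phi> (gen p (p - 1)) = gen p (p - 1) \<otimes>\<^bsub>Wgrp p m\<^esub>
                 finprod (Wgrp p m) (\<lambda>j. gen p j [^]\<^bsub>Wgrp p m\<^esub> (- int (p choose j))) {1..p - 1})
       \<and> (\<forall>\<phi>. \<phi> \<in> hom (Wgrp p m) (Wgrp p m)
            \<and> (\<forall>i. i + 2 \<le> p \<longrightarrow>
                   \<phi> (gen p i) = gen p i \<otimes>\<^bsub>Wgrp p m\<^esub> gen p (Suc i))
            \<and> \<phi> (gen p (p - 1)) = gen p (p - 1) \<otimes>\<^bsub>Wgrp p m\<^esub>
                 finprod (Wgrp p m) (\<lambda>j. gen p j [^]\<^bsub>Wgrp p m\<^esub> (- int (p choose j))) {1..p - 1}
          \<longrightarrow> restrict \<phi> (carrier (Wgrp p m)) \<in> auto (Wgrp p m)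
            \<and> group.ord (AutoGroup (Wgrp p m)) (restrict \<phi> (carrier (Wgrp p m))) = p
            \<and> restrict \<phi> (carrier (Wgrp p m)) [^]\<^bsub>AutoGroup (Wgrp p m)\<^esub> (p ^ (m - 1))
                = \<one>\<^bsub>AutoGroup (Wgrp p m)\<^esub>)"
proof -
  interpret Wctx p m using assms by unfold_locales
  show ?thesis
  proof (intro conjI allI impI)
    show "\<exists>\<phi>. \<phi> \<in> hom W W
            \<and> (\<forall>i. i + 2 \<le> p \<longrightarrow> \<phi> (gen p i) = gen p i \<otimes>\<^bsub>W\<^esub> gen p (Suc i))
            \<and> \<phi> (gen p (p - 1)) = gen p (p - 1) \<otimes>\<^bsub>W\<^esub>
                 finprod W (\<lambda>j. gen p j [^]\<^bsub>W\<^esub> (- int (p choose j))) {1..p - 1}"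
      using phi0_hom phi0_gen phi0_gen_last by blast
  next
    fix \<phi> assume a: "\<phi> \<in> hom W W
            \<and> (\<forall>i. i + 2 \<le> p \<longrightarrow> \<phi> (gen p i) = gen p i \<otimes>\<^bsub>W\<^esub> gen p (Suc i))
            \<and> \<phi> (gen p (p - 1)) = gen p (p - 1) \<otimes>\<^bsub>W\<^esub>
                 finprod W (\<lambda>j. gen p j [^]\<^bsub>W\<^esub> (- int (p choose j))) {1..p - 1}"
    then have e: "restrict \<phi> (carrier W) = h" using unique by blast
    show "restrict \<phi> (carrier W) \<in> auto W" unfolding e by (rule h_auto)
    show "group.ord AG (restrict \<phi> (carrier W)) = p" unfolding e by (rule h_ord)
    show "restrict \<phi> (carrier W) [^]\<^bsub>AG\<^esub> (p ^ (m - 1)) = \<one>\<^bsub>AG\<^esub>" unfolding e by (rule h_pow_big)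
  qed
qed

end
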